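(* Let $(\mathbf k((G)),l)$ be a series field with prelogarithmic section, with associated EL-series field $(\mathbf k((G))^{EL},\mathrm{Log},\mathrm{Exp})$. Let $U\subseteq H\subseteq G$ be subgroups such that $U$ is a proper convex subgroup of $H$ ($U=\{1\}$ allowed). Suppose $(\dagger)$: $\mathrm{Log}(h)<|f|$ for all $h\in H$ and all $f\in\mathbf k((H^{>U}))$ with $f\ne0$. Let $H^{\#,U}=H\cdot\mathrm{Exp}(\mathbf k((H^{>U})))\subseteq G^\#$. Then $H$ is a proper convex subgroup of $H^{\#,U}$, $H^{\#,U}$ is the anti-lexicographic product of $H$ and $\mathrm{Exp}(\mathbf k((H^{>U})))$, and $\mathrm{Log}(h')<|f|$ for all $h'\in H^{\#,U}$ and all nonzero $f\in\mathbf k(((H^{\#,U})^{>H}))$.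
   Context: Let $\mathbf k$ be an ordered field and $(G,\cdot,<)$ a totally ordered abelian group (written multiplicatively). $\mathbf k((G))$ denotes the field of generalized power series $\alpha=\sum_{g\in G}\alpha(g)\,g$ ($\alpha(g)\in\mathbf k$) with anti-well-ordered support, usual operations, canonical valuation $v(\alpha)=\max\operatorname{supp}\alpha$ and ordering $\alpha>0$ iff $\alpha(v(\alpha))>0$; $\mathbf k$, $G$ are identified with subsets of $\mathbf k((G))$. For $S\subseteq G$, $\mathbf k((S))=\{\alpha:\operatorname{supp}\alpha\subseteq S\}$. For a subgroup $H$ and $A\subseteq G$, $H^{>A}=\{h\in H:h>a\ \forall a\in A\}$, $H^{>1}=\{h\in H:h>1\}$. Every $\alpha>0$ is uniquely $\alpha=g\,a(1+\varepsilon)$ with $g=v(\alpha)$, $a\in\mathbf k^{>0}$, $\varepsilon\in\mathbf k((G^{<1}))$. A prelogarithmic section is an order-preserving group embedding $l:(G,\cdot)\to(\mathbf k((G^{>1})),+)$. Fix an order-preserving group isomorphism $\log:(\mathbf k^{>0},\cdot)\to(\mathbf k,+)$. The prelogarithm of $l$ is $L(g\,a(1+\varepsilon))=l(g)+\log a+\sum_{i\ge1}(-1)^{i-1}\varepsilon^i/i$. Exponential extension: $G^\#$ is the ordered abelian group of formal symbols $e(\alpha)$, $\alpha\in\mathbf k((G^{>1}))$, with $e(\alpha)e(\beta)=e(\alpha+\beta)$, $e(\alpha)<e(\beta)\iff\alpha<\beta$, and $e(l(g))$ identified with $g\in G$; $l^\#(e(\alpha))=\alpha$ is a prelogarithmic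 section of $\mathbf k((G^\#))$ extending $l$. Iterating: $G^{\#n}$, $l^{\#n}$, prelogarithms $L^{\#n}$. The EL-series field is $\mathbf k((G))^{EL}=\bigcup_n\mathbf k((G^{\#n}))$ with $\mathrm{Log}=\bigcup_nL^{\#n}$, an order preserving isomorphism from the positive elements onto $(\mathbf k((G))^{EL},+)$; $\mathrm{Exp}=\mathrm{Log}^{-1}$. Note $\mathrm{Log}(g)=l(g)$ for $g\in G$, and $\mathrm{Exp}(f)\in G^\#$ for $f\in\mathbf k((G^{>1}))$. "Anti-lexicographic product" of subgroups $A,B$ of an ordered group: the group is $A\cdot B$, the product is direct, and $A$ is convex in it. *)

theory Defs
  imports Main "HOL-Library.Function_Algebras"
begin

definition supp :: "('i \<Rightarrow> 'k::zero) \<Rightarrow> 'i set" where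
  "supp f = {i. f i \<noteq> 0}"

definition anti_wo :: "('i \<Rightarrow> 'i \<Rightarrow> bool) \<Rightarrow> 'i set \<Rightarrow> bool" where
  "anti_wo lt S \<longleftrightarrow> (\<forall>T \<subseteq> S. T \<noteq> {} \<longrightarrow> (\<exists>m\<in>T. \<forall>x\<in>T. \<not> lt m x))"

definition ser :: "('i \<Rightarrow> 'i \<Rightarrow> bool) \<Rightarrow> 'i set \<Rightarrow> ('i \<Rightarrow> 'k::zero) set" where
  "ser lt S = {f. anti_wo lt (supp f) \<and> supp f \<subseteq> S}"

definition val :: "('i \<Rightarrow> 'i \<Rightarrow> bool) \<Rightarrow> ('i \<Rightarrow> 'k::zero) \<Rightarrow> 'i" where
  "val lt f = (THE m. m \<in> supp f \<and> (\<forall>x\<in>supp f. \<not> lt m x))"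

definition spos :: "('i \<Rightarrow> 'i \<Rightarrow> bool) \<Rightarrow> ('i \<Rightarrow> 'k::linordered_field) \<Rightarrow> bool" where
  "spos lt f \<longleftrightarrow> supp f \<noteq> {} \<and> 0 < f (val lt f)"

definition sless :: "('i \<Rightarrow> 'i \<Rightarrow> bool) \<Rightarrow> ('i \<Rightarrow> 'k::linordered_field) \<Rightarrow> ('i \<Rightarrow> 'k) \<Rightarrow> bool" where
  "sless lt f g \<longleftrightarrow> spos lt (g - f)"

definition sabs :: "('i \<Rightarrow> 'i \<Rightarrow> bool) \<Rightarrow> ('i \<Rightarrow> 'k::linordered_field) \<Rightarrow> ('i \<Rightarrow> 'k)" where
  "sabs lt f = (if spos lt (- f) then - f else f)"

definition add_subgroup :: "'a::ab_group_add set \<Rightarrow> bool" where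
  "add_subgroup S \<longleftrightarrow> 0 \<in> S \<and> (\<forall>x\<in>S. \<forall>y\<in>S. x + y \<in> S \<and> - x \<in> S)"

definition convex_in :: "('a \<Rightarrow> 'a \<Rightarrow> bool) \<Rightarrow> 'a set \<Rightarrow> 'a set \<Rightarrow> bool" where
  "convex_in lt A B \<longleftrightarrow> A \<subseteq> B \<and>
     (\<forall>a\<in>A. \<forall>a'\<in>A. \<forall>b\<in>B. \<not> lt b a \<and> \<not> lt a' b \<longrightarrow> b \<in> A)"

definition proper_convex_subgroup :: "('a::ab_group_add \<Rightarrow> 'a \<Rightarrow> bool) \<Rightarrow> 'a set \<Rightarrow> 'a set \<Rightarrow> bool" where
  "proper_convex_subgroup lt A B \<longleftrightarrow>
     add_subgroup A \<and> add_subgroup B \<and> convex_in lt A B \<and> A \<noteq> B"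

definition anti_lex_product :: "('a::ab_group_add \<Rightarrow> 'a \<Rightarrow> bool) \<Rightarrow> 'a set \<Rightarrow> 'a set \<Rightarrow> 'a set \<Rightarrow> bool" where
  "anti_lex_product lt A B C \<longleftrightarrow>
     add_subgroup A \<and> add_subgroup B \<and> C = {a + b | a b. a \<in> A \<and> b \<in> B} \<and>
     A \<inter> B = {0} \<and> convex_in lt A C"

definition above :: "('a \<Rightarrow> 'a \<Rightarrow> bool) \<Rightarrow> 'a set \<Rightarrow> 'a set \<Rightarrow> 'a set" where
  "above lt H A = {h \<in> H. \<forall>a\<in>A. lt a h}"

definition prelog_section :: "('g::linordered_ab_group_add \<Rightarrow> ('g \<Rightarrow> 'k::linordered_field)) \<Rightarrow> bool" where
  "prelog_section l \<longleftrightarrow>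
     (\<forall>g. l g \<in> ser (<) {x. 0 < x}) \<and>
     (\<forall>a b. l (a + b) = l a + l b) \<and>
     (\<forall>a b. a < b \<longrightarrow> sless (<) (l a) (l b))"

text \<open>The symbol e(alpha), alpha in k((G^{>0})), is represented by
  alpha itself; G^# is the set below with group operation + and order sless (<);
  g in G is identified with e(l g) = l g.\<close>
definition Gsharp :: "('g::linordered_ab_group_add \<Rightarrow> 'k::linordered_field) set" where
  "Gsharp = ser (<) {x. 0 < x}"

text \<open>Embedding k((G)) into k((G^#)): the monomial g goes to the monomial e(l g).\<close>
definition emb :: "('g \<Rightarrow> ('g \<Rightarrow> 'k::zero)) \<Rightarrow> ('g \<Rightarrow> 'k) \<Rightarrow> (('g \<Rightarrow> 'k) \<Rightarrow> 'k)" where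
  "emb l \<alpha> = (\<lambda>\<beta>. if \<beta> \<in> range l then \<alpha> (the_inv l \<beta>) else 0)"

text \<open>Log on G^# (= l^#): Log(e(alpha)) = alpha, viewed as an element of k((G^#)).\<close>
definition Log_sharp :: "('g \<Rightarrow> ('g \<Rightarrow> 'k::zero)) \<Rightarrow> ('g \<Rightarrow> 'k) \<Rightarrow> (('g \<Rightarrow> 'k) \<Rightarrow> 'k)" where
  "Log_sharp l x = emb l x"

definition Exp_sharp :: "('g \<Rightarrow> 'k) \<Rightarrow> ('g \<Rightarrow> 'k)" where
  "Exp_sharp f = f"

definition Hsharp :: "('g::linordered_ab_group_add \<Rightarrow> ('g \<Rightarrow> 'k::linordered_field)) \<Rightarrow> 'g set \<Rightarrow> 'g set \<Rightarrow> ('g \<Rightarrow> 'k) set" where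
  "Hsharp l H U = {l h + Exp_sharp f | h f. h \<in> H \<and> f \<in> ser (<) (above (<) H U)}"

end

theory Submission
  imports Defs
begin

lemma supp_uminus[simp]: "supp (- f) = supp (f::'a \<Rightarrow> 'k::group_add)"
  by (simp add: supp_def)
lemma supp_add: "supp (f + g) \<subseteq> supp f \<union> supp (g::'a \<Rightarrow> 'k::monoid_add)"
  by (auto simp: supp_def)
lemma supp_diff: "supp (f - g) \<subseteq> supp f \<union> supp (g::'a \<Rightarrow> 'k::group_add)"
  by (auto simp: supp_def)
lemma supp_zero[simp]: "supp (0::'a\<Rightarrow>'k::zero) = {}" by (simp add: supp_def)
lemma supp_empty_iff: "supp f = {} \<longleftrightarrow> f = (0::'a\<Rightarrow>'k::zero)" by (auto simp: supp_def fun_eq_iff)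

lemma anti_wo_subset: "anti_wo lt S \<Longrightarrow> T \<subseteq> S \<Longrightarrow> anti_wo lt T"
  unfolding anti_wo_def by blast

lemma anti_wo_Un: fixes S T :: "'g::linorder set"
  assumes "anti_wo (<) S" "anti_wo (<) T" shows "anti_wo (<) (S \<union> T)"
  unfolding anti_wo_def
proof (intro allI impI)
  fix X assume X: "X \<subseteq> S \<union> T" "X \<noteq> {}"
  show "\<exists>m\<in>X. \<forall>x\<in>X. \<not> m < x"
  proof (cases "X \<inter> S = {}")
    case True
    then have "X \<subseteq> T" using X by blast
    with assms(2) X show ?thesis unfolding anti_wo_def by blast
  next
    case False
    then obtain ms where ms: "ms \<in> X \<inter> S" "\<forall>x\<in>X \<inter> S. \<not> ms < x"
      using assms(1)[unfolded anti_wo_def, rule_format, of "X \<inter> S"] by blast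
    show ?thesis
    proof (cases "X \<inter> T = {}")
      case True then show ?thesis using ms X by blast
    next
      case False
      then obtain mt where mt: "mt \<in> X \<inter> T" "\<forall>x\<in>X \<inter> T. \<not> mt < x"
        using assms(2)[unfolded anti_wo_def, rule_format, of "X \<inter> T"] by blast
      show ?thesis
      proof (cases "ms < mt")
        case True
        have "\<forall>x\<in>X. \<not> mt < x"
        proof
          fix x assume "x \<in> X"
          then have "x \<in> S \<or> x \<in> T" using X by blast
          then show "\<not> mt < x"
          proof
            assume "x \<in> S" then have "\<not> ms < x" using ms \<open>x \<in> X\<close> by blast
            then show ?thesis using True by (auto dest: less_trans)
          next
            assume "x \<in> T" then show ?thesis using mt \<open>x \<in> X\<close> by blast
          qed
        qed
        then show ?thesis using mt by blast
      next
        case False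
        have "\<forall>x\<in>X. \<not> ms < x"
        proof
          fix x assume "x \<in> X"
          then have "x \<in> S \<or> x \<in> T" using X by blast
          then show "\<not> ms < x"
          proof
            assume "x \<in> S" then show ?thesis using ms \<open>x \<in> X\<close> by blast
          next
            assume "x \<in> T" then have "\<not> mt < x" using mt \<open>x \<in> X\<close> by blast
            then show ?thesis using False by simp
          qed
        qed
        then show ?thesis using ms by blast
      qed
    qed
  qed
qed

abbreviation AW :: "('g::linorder \<Rightarrow> 'k::zero) \<Rightarrow> bool" where "AW f \<equiv> anti_wo (<) (supp f)"

lemma AW_add: "AW f \<Longrightarrow> AW g \<Longrightarrow> AW (f + (g::'g::linorder \<Rightarrow> 'k::monoid_add))"
  by (meson anti_wo_Un anti_wo_subset supp_add)
lemma AW_diff: "AW f \<Longrightarrow> AW g \<Longrightarrow> AW (f - (g::'g::linorder \<Rightarrow> 'k::group_add))"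
  by (meson anti_wo_Un anti_wo_subset supp_diff)
lemma AW_uminus: "AW f \<Longrightarrow> AW (- (f::'g::linorder \<Rightarrow> 'k::group_add))"
  by simp

lemma val_supp_cong: "supp f = supp g \<Longrightarrow> val lt f = val lt g" unfolding val_def by simp

lemma val_unique: assumes "m \<in> supp f" "\<forall>x\<in>supp f. \<not> lt m x"
  "\<And>m'. m' \<in> supp f \<Longrightarrow> \<forall>x\<in>supp f. \<not> lt m' x \<Longrightarrow> m' = m" shows "val lt f = m"
  unfolding val_def
proof (rule the_equality)
  show "m \<in> supp f \<and> (\<forall>x\<in>supp f. \<not> lt m x)" using assms(1,2) by blast
  fix m' assume "m' \<in> supp f \<and> (\<forall>x\<in>supp f. \<not> lt m' x)"
  then show "m' = m" using assms(3) by blast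
qed

lemma val_lin: fixes f :: "'g::linorder \<Rightarrow> 'k::zero"
  assumes "m \<in> supp f" "\<forall>x\<in>supp f. x \<le> m" shows "val (<) f = m"
proof (rule val_unique)
  show "m \<in> supp f" by fact
  show "\<forall>x\<in>supp f. \<not> m < x" using assms(2) by (simp add: not_less)
  fix m' assume "m' \<in> supp f" "\<forall>x\<in>supp f. \<not> m' < x"
  then have "m \<le> m'" "m' \<le> m" using assms by (auto simp: not_less)
  then show "m' = m" by simp
qed

lemma val_max: fixes f :: "'g::linorder \<Rightarrow> 'k::zero"
  assumes "AW f" "f \<noteq> 0" shows "val (<) f \<in> supp f" "\<forall>x\<in>supp f. x \<le> val (<) f"
proof -
  obtain m where m: "m \<in> supp f" "\<forall>x\<in>supp f. \<not> m < x"
    using assms supp_empty_iff[of f] unfolding anti_wo_def by blast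
  then have "val (<) f = m" by (intro val_lin) (auto simp: not_less)
  then show "val (<) f \<in> supp f" "\<forall>x\<in>supp f. x \<le> val (<) f" using m by (auto simp: not_less)
qed

lemma spos_zero: "\<not> spos lt (0::'a \<Rightarrow> 'k::linordered_field)" by (simp add: spos_def)

lemma spos_neg_asym: "spos lt (f::'a \<Rightarrow> 'k::linordered_field) \<Longrightarrow> \<not> spos lt (- f)"
  using val_supp_cong[of "-f" f lt] by (auto simp: spos_def)

lemma sless_irrefl: "\<not> sless lt f (f::'a \<Rightarrow> 'k::linordered_field)"
  by (simp add: sless_def spos_zero)

lemma sless_asym: "sless lt a (b::'a \<Rightarrow> 'k::linordered_field) \<Longrightarrow> \<not> sless lt b a"
  unfolding sless_def using spos_neg_asym[of lt "b - a"] by simp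

lemma spos_cases: fixes d :: "'g::linorder \<Rightarrow> 'k::linordered_field"
  assumes "AW d" "d \<noteq> 0" shows "spos (<) d \<or> spos (<) (- d)"
proof -
  have v: "val (<) d \<in> supp d" using val_max assms by blast
  have "val (<) (-d) = val (<) d" by (rule val_supp_cong) simp
  then show ?thesis using v unfolding spos_def supp_def
    by (auto simp: neq_iff)
qed

lemma spos_val: fixes d :: "'g::linorder \<Rightarrow> 'k::linordered_field"
  assumes "AW d" "spos (<) d" shows "val (<) d \<in> supp d" "\<forall>x\<in>supp d. x \<le> val (<) d" "0 < d (val (<) d)"
  using assms val_max[of d] supp_empty_iff[of d] by (auto simp: spos_def)

lemma spos_add: fixes a b :: "'g::linorder \<Rightarrow> 'k::linordered_field"
  assumes "AW a" "AW b" "spos (<) a" "spos (<) b" shows "spos (<) (a + b)"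
proof -
  obtain va where A: "\<forall>x\<in>supp a. x \<le> va" "0 < a va" using spos_val[OF assms(1,3)] by blast
  obtain vb where B: "\<forall>x\<in>supp b. x \<le> vb" "0 < b vb" using spos_val[OF assms(2,4)] by blast
  define m where "m = max va vb"
  have za: "\<And>y. va < y \<Longrightarrow> a y = 0"
  proof -
    fix y assume "va < y" then have "y \<notin> supp a" using A(1) by (blast dest: leD)
    then show "a y = 0" by (simp add: supp_def)
  qed
  have zb: "\<And>y. vb < y \<Longrightarrow> b y = 0"
  proof -
    fix y assume "vb < y" then have "y \<notin> supp b" using B(1) by (blast dest: leD)
    then show "b y = 0" by (simp add: supp_def)
  qed
  have pos: "0 < a m + b m"
  proof (cases va vb rule: linorder_cases)
    case less
    then have "m = vb" "a vb = 0" using za by (auto simp: m_def)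
    then show ?thesis using B(2) by simp
  next
    case equal then show ?thesis using A(2) B(2) by (simp add: m_def)
  next
    case greater
    then have "m = va" "b va = 0" using zb by (auto simp: m_def)
    then show ?thesis using A(2) by simp
  qed
  have msupp: "m \<in> supp (a + b)" using pos by (simp add: supp_def)
  have "\<forall>x\<in>supp (a+b). x \<le> m"
  proof
    fix x assume "x \<in> supp (a+b)"
    then have "x \<in> supp a \<or> x \<in> supp b" using supp_add[of a b] by blast
    then have "x \<le> va \<or> x \<le> vb" using A(1) B(1) by blast
    then show "x \<le> m" unfolding m_def by (simp only: le_max_iff_disj)
  qed
  then have "val (<) (a+b) = m" using msupp by (intro val_lin)
  then show ?thesis using pos msupp unfolding spos_def by auto
qed

lemma sless_trans: fixes a b c :: "'g::linorder \<Rightarrow> 'k::linordered_field"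
  assumes "AW a" "AW b" "AW c" "sless (<) a b" "sless (<) b c" shows "sless (<) a c"
proof -
  have "spos (<) ((c - b) + (b - a))"
    apply (rule spos_add)
       apply (rule AW_diff[OF assms(3,2)])
      apply (rule AW_diff[OF assms(2,1)])
    using assms(4,5) by (simp_all add: sless_def)
  moreover have "(c - b) + (b - a) = c - a" by simp
  ultimately show ?thesis by (simp add: sless_def)
qed

lemma sless_trich: fixes a b :: "'g::linorder \<Rightarrow> 'k::linordered_field"
  assumes "AW a" "AW b" shows "a = b \<or> sless (<) a b \<or> sless (<) b a"
proof (cases "a = b")
  case False
  then have "b - a \<noteq> 0" by simp
  then have "spos (<) (b - a) \<or> spos (<) (- (b - a))" using spos_cases AW_diff[OF assms(2,1)] by blast
  moreover have "- (b - a) = a - b" by simp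
  ultimately show ?thesis unfolding sless_def by auto
next
  case True then show ?thesis by simp
qed


theorem lemma8:
  fixes l :: "'g::linordered_ab_group_add \<Rightarrow> ('g \<Rightarrow> 'k::linordered_field)"
    and U H :: "'g set"
  assumes log_k: "\<exists>lg::'k \<Rightarrow> 'k. bij_betw lg {x. 0 < x} UNIV \<and> strict_mono_on {x. 0 < x} lg \<and>
                     (\<forall>x>0. \<forall>y>0. lg (x * y) = lg x + lg y)"
    and l: "prelog_section l"
    and UH: "proper_convex_subgroup (<) U H"
    and dagger: "\<forall>h\<in>H. \<forall>f\<in>ser (<) (above (<) H U). f \<noteq> 0 \<longrightarrow> sless (<) (l h) (sabs (<) f)"
  shows "proper_convex_subgroup (sless (<)) (l ` H) (Hsharp l H U)
         \<and> anti_lex_product (sless (<)) (l ` H) (Exp_sharp ` ser (<) (above (<) H U)) (Hsharp l H U)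
         \<and> (\<forall>h'\<in>Hsharp l H U. \<forall>f\<in>ser (sless (<)) (above (sless (<)) (Hsharp l H U) (l ` H)).
              f \<noteq> 0 \<longrightarrow> sless (sless (<)) (Log_sharp l h') (sabs (sless (<)) f))"
proof -
  have lser: "\<And>g. l g \<in> ser (<) {x. 0 < x}" and ladd: "\<And>a b. l (a + b) = l a + l b"
    and lmono: "\<And>a b. a < b \<Longrightarrow> sless (<) (l a) (l b)"
    using l unfolding prelog_section_def by blast+
  have lAW: "\<And>g. AW (l g)" using lser by (simp add: ser_def)
  have l0: "l 0 = 0"
  proof -
    have "l 0 = l 0 + l 0" using ladd[of 0 0] by simp
    then show ?thesis by simp
  qed
  have lneg: "l (- a) = - l a" for a
  proof -
    have "l a + l (-a) = 0" using ladd[of a "-a"] l0 by simp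
    from minus_unique[OF this] show ?thesis by simp
  qed
  have ldiff: "l (a - b) = l a - l b" for a b
    using ladd[of a "-b"] lneg[of b] by simp
  have linj: "inj l"
  proof (rule injI)
    fix a b assume e: "l a = l b"
    show "a = b"
    proof (rule ccontr)
      assume "a \<noteq> b"
      then have "a < b \<or> b < a" by auto
      then show False using lmono e sless_irrefl by metis
    qed
  qed
  have Usub: "add_subgroup U" and Hsub: "add_subgroup H" and UconvH: "convex_in (<) U H"
    and UneH: "U \<noteq> H" using UH unfolding proper_convex_subgroup_def by blast+
  have H0: "0 \<in> H" and Hadd: "\<And>a b. a\<in>H \<Longrightarrow> b\<in>H \<Longrightarrow> a+b\<in>H" and Hneg: "\<And>a. a\<in>H \<Longrightarrow> -a\<in>H"
    using Hsub unfolding add_subgroup_def by blast+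
  have Hdiff: "a - b \<in> H" if "a\<in>H" "b\<in>H" for a b using Hadd[OF that(1) Hneg[OF that(2)]] by simp
  have U0: "0 \<in> U" and Uneg: "\<And>a. a\<in>U \<Longrightarrow> -a\<in>U"
    using Usub unfolding add_subgroup_def by blast+
  have UHs: "U \<subseteq> H" using UconvH unfolding convex_in_def by blast
  have Uconv: "\<And>a a' b. a \<in> U \<Longrightarrow> a' \<in> U \<Longrightarrow> b \<in> H \<Longrightarrow> \<not> b < a \<Longrightarrow> \<not> a' < b \<Longrightarrow> b \<in> U"
    using UconvH unfolding convex_in_def by blast
  define S where "S = above (<) H U"
  have S_H: "S \<subseteq> H" unfolding S_def above_def by blast
  have serS0: "(0::'g \<Rightarrow> 'k) \<in> ser (<) S" by (simp add: ser_def anti_wo_def)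
  have serS_AW: "\<And>f. f \<in> ser (<) S \<Longrightarrow> AW f" by (simp add: ser_def)
  have serS_add: "f + g \<in> ser (<) S" if "f \<in> ser (<) S" "g \<in> ser (<) S" for f g :: "'g \<Rightarrow> 'k"
    using that AW_add[of f g] supp_add[of f g] by (auto simp: ser_def)
  have serS_neg: "- f \<in> ser (<) S" if "f \<in> ser (<) S" for f :: "'g \<Rightarrow> 'k"
    using that by (auto simp: ser_def)
  have serS_sub: "add_subgroup (ser (<) S :: ('g \<Rightarrow> 'k) set)"
    unfolding add_subgroup_def
  proof (intro conjI ballI)
    show "(0::'g \<Rightarrow> 'k) \<in> ser (<) S" by (rule serS0)
    fix x y :: "'g \<Rightarrow> 'k" assume xy: "x \<in> ser (<) S" "y \<in> ser (<) S"
    show "x + y \<in> ser (<) S" by (rule serS_add[OF xy])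
    show "- x \<in> ser (<) S" by (rule serS_neg[OF xy(1)])
  qed
  have "U \<subset> H" using UHs UneH by (rule psubsetI)
  then obtain h1 where "h1 \<in> H - U" using psubset_imp_ex_mem by blast
  then have h1: "h1 \<in> H" "h1 \<notin> U" by simp_all
  have h1nz: "h1 \<noteq> 0" using h1 U0 by blast
  define h0 where "h0 = (if 0 < h1 then h1 else -h1)"
  have h0H: "h0 \<in> H" using h1 Hneg by (simp add: h0_def)
  have h0U: "h0 \<notin> U"
  proof
    assume "h0 \<in> U"
    then have "h1 \<in> U \<or> - h1 \<in> U" by (auto simp: h0_def split: if_splits)
    then show False using h1 Uneg[of "-h1"] by auto
  qed
  have h0pos: "0 < h0" using h1nz by (auto simp: h0_def)
  have h0S: "h0 \<in> S"
    unfolding S_def above_def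
  proof (intro CollectI conjI ballI h0H)
    fix u assume u: "u \<in> U"
    show "u < h0"
    proof (rule ccontr)
      assume "\<not> u < h0"
      then have "h0 \<in> U" using Uconv[OF U0 u h0H] h0pos by simp
      with h0U show False by blast
    qed
  qed
  define e0 :: "'g \<Rightarrow> 'k" where "e0 = (\<lambda>x. if x = h0 then 1 else 0)"
  have supp_e0: "supp e0 = {h0}" by (auto simp: supp_def e0_def)
  have e0ser: "e0 \<in> ser (<) S"
    unfolding ser_def using h0S by (auto simp: supp_e0 anti_wo_def subset_singleton_iff)
  have e0nz: "e0 \<noteq> 0"
  proof
    assume "e0 = 0" then have "supp e0 = {}" by simp
    with supp_e0 show False by simp
  qed
  have val_e0: "val (<) e0 = h0" by (rule val_lin) (auto simp: supp_e0)
  have spos_e0: "spos (<) e0" unfolding spos_def using val_e0 supp_e0 by (simp add: e0_def)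
  have sabs_e0: "sabs (<) e0 = e0" unfolding sabs_def using spos_neg_asym[OF spos_e0] by simp
  have dag: "sless (<) (l h) (sabs (<) f)" if "h\<in>H" "f \<in> ser (<) S" "f \<noteq> 0" for h f
    using dagger that unfolding S_def by blast
  define HS where "HS = {l h + f | h f. h \<in> H \<and> f \<in> ser (<) S}"
  have HSeq: "Hsharp l H U = HS" unfolding HS_def Hsharp_def Exp_sharp_def S_def by simp
  have ExpS: "Exp_sharp ` ser (<) (above (<) H U) = ser (<) S" by (simp add: Exp_sharp_def S_def)
  have HS_AW: "AW x" if "x \<in> HS" for x
    using that AW_add[OF lAW serS_AW] unfolding HS_def by blast
  have lH_sub: "add_subgroup (l ` H)"
    unfolding add_subgroup_def
  proof (intro conjI ballI)
    show "0 \<in> l ` H" using H0 l0 by (metis image_eqI)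
    fix x y assume "x \<in> l ` H" "y \<in> l ` H"
    then obtain a b where ab: "a\<in>H" "b\<in>H" "x = l a" "y = l b" by blast
    have "x + y = l (a + b)" using ab ladd by simp
    then show "x + y \<in> l ` H" using Hadd[OF ab(1,2)] by blast
    have "- x = l (- a)" using ab lneg by simp
    then show "- x \<in> l ` H" using Hneg[OF ab(1)] by blast
  qed
  have HS_sub: "add_subgroup HS"
    unfolding add_subgroup_def
  proof (intro conjI ballI)
    have "0 = l 0 + 0" using l0 by simp
    then show "0 \<in> HS" unfolding HS_def using H0 serS0 by blast
    fix x y assume "x \<in> HS" "y \<in> HS"
    then obtain a b f g where ab: "a\<in>H" "b\<in>H" "f \<in> ser (<) S" "g \<in> ser (<) S" "x = l a + f" "y = l b + g"
      unfolding HS_def by blast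
    have "x + y = l (a + b) + (f + g)" using ab ladd by (simp add: algebra_simps)
    then show "x + y \<in> HS" unfolding HS_def using Hadd[OF ab(1,2)] serS_add[OF ab(3,4)] by blast
    have "- x = l (- a) + (- f)" using ab lneg by (simp add: algebra_simps)
    then show "- x \<in> HS" unfolding HS_def using Hneg[OF ab(1)] serS_neg[OF ab(3)] by blast
  qed
  have lH_HS: "l ` H \<subseteq> HS"
  proof
    fix x assume "x \<in> l ` H"
    then obtain a where a: "a \<in> H" "x = l a" by blast
    then have "x = l a + 0" by simp
    then show "x \<in> HS" unfolding HS_def using a(1) serS0 by blast
  qed
  have conv: "convex_in (sless (<)) (l ` H) HS"
    unfolding convex_in_def
  proof (intro conjI lH_HS ballI impI)
    fix a a' b assume aH: "a \<in> l ` H" and a'H: "a' \<in> l ` H" and "b \<in> HS"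
      and nb: "\<not> sless (<) b a \<and> \<not> sless (<) a' b"
    obtain ha where ha: "ha \<in> H" "a = l ha" using aH by blast
    obtain ha' where ha': "ha' \<in> H" "a' = l ha'" using a'H by blast
    obtain hb fb where hb: "hb\<in>H" "fb \<in> ser (<) S" "b = l hb + fb" using \<open>b \<in> HS\<close> unfolding HS_def by blast
    show "b \<in> l ` H"
    proof (cases "fb = 0")
      case True then show ?thesis using hb by simp
    next
      case False
      from spos_cases[OF serS_AW[OF hb(2)] False] consider "spos (<) fb" | "spos (<) (-fb)" by blast
      then show ?thesis
      proof cases
        case 1
        have "sabs (<) fb = fb" unfolding sabs_def using spos_neg_asym[OF 1] by simp
        then have "sless (<) (l (ha' - hb)) fb" using dag[OF Hdiff[OF ha'(1) hb(1)] hb(2) False] by simp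
        then have P: "spos (<) (fb - l (ha' - hb))" unfolding sless_def .
        have E: "fb - l (ha' - hb) = b - a'" using hb(3) ha'(2) by (simp add: ldiff algebra_simps)
        from P have "sless (<) a' b" unfolding E sless_def .
        with nb show ?thesis by blast
      next
        case 2
        have "sabs (<) fb = - fb" unfolding sabs_def using 2 by simp
        then have "sless (<) (l (hb - ha)) (- fb)" using dag[OF Hdiff[OF hb(1) ha(1)] hb(2) False] by simp
        then have P: "spos (<) (- fb - l (hb - ha))" unfolding sless_def .
        have E: "- fb - l (hb - ha) = a - b" using hb(3) ha(2) by (simp add: ldiff algebra_simps)
        from P have "sless (<) b a" unfolding E sless_def .
        with nb show ?thesis by blast
      qed
    qed
  qed
  have neq: "l ` H \<noteq> HS"
  proof
    assume eq: "l ` H = HS"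
    have "e0 = l 0 + e0" using l0 by simp
    then have "e0 \<in> HS" unfolding HS_def using H0 e0ser by blast
    then obtain h where h: "h \<in> H" "e0 = l h" using eq by auto
    from dag[OF h(1) e0ser e0nz] have "sless (<) e0 e0" using sabs_e0 h(2) by simp
    then show False using sless_irrefl by blast
  qed
  have inter: "l ` H \<inter> ser (<) S = {0}"
  proof
    show "{0} \<subseteq> l ` H \<inter> ser (<) S" using H0 l0 serS0 by (metis IntI empty_subsetI image_eqI insert_subset)
    show "l ` H \<inter> ser (<) S \<subseteq> {0}"
    proof
      fix x assume "x \<in> l ` H \<inter> ser (<) S"
      then obtain h where h: "h \<in> H" "x = l h" "x \<in> ser (<) S" by blast
      show "x \<in> {0}"
      proof (rule ccontr)
        assume "x \<notin> {0}" then have xnz: "x \<noteq> 0" by simp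
        show False
        proof (cases "spos (<) (- x)")
          case True
          then have "sabs (<) x = - x" by (simp add: sabs_def)
          then have "sless (<) (l (- h)) (- x)" using dag[OF Hneg[OF h(1)] h(3) xnz] by simp
          then show False using lneg h(2) sless_irrefl by metis
        next
          case False
          then have "sabs (<) x = x" by (simp add: sabs_def)
          then have "sless (<) (l h) x" using dag[OF h(1) h(3) xnz] by simp
          then show False using h(2) sless_irrefl by metis
        qed
      qed
    qed
  qed
  have prod: "HS = {a + b | a b. a \<in> l ` H \<and> b \<in> ser (<) S}" unfolding HS_def by blast
  have P3: "\<forall>h'\<in>HS. \<forall>f\<in>ser (sless (<)) (above (sless (<)) HS (l ` H)).
              f \<noteq> 0 \<longrightarrow> sless (sless (<)) (Log_sharp l h') (sabs (sless (<)) f)"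
  proof (intro ballI impI)
    fix h' :: "'g \<Rightarrow> 'k" and f :: "('g \<Rightarrow> 'k) \<Rightarrow> 'k" assume h'HS: "h' \<in> HS" and fser: "f \<in> ser (sless (<)) (above (sless (<)) HS (l ` H))"
      and fnz: "f \<noteq> 0"
    obtain h f0 where hf: "h\<in>H" "f0 \<in> ser (<) S" "h' = l h + f0" using h'HS unfolding HS_def by blast
    have fAW: "anti_wo (sless (<)) (supp f)" and fsupp: "supp f \<subseteq> above (sless (<)) HS (l ` H)"
      using fser by (auto simp: ser_def)
    have suppf_HS: "y \<in> HS" if "y \<in> supp f" for y using fsupp that by (auto simp: above_def)
    have suppf_above: "sless (<) (l a) y" if "y \<in> supp f" "a \<in> H" for y a
      using fsupp that by (auto simp: above_def)
    have "supp f \<noteq> {}" using fnz supp_empty_iff[of f] by simp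
    then obtain \<beta> where \<beta>: "\<beta> \<in> supp f" "\<forall>x\<in>supp f. \<not> sless (<) \<beta> x"
      using fAW[unfolded anti_wo_def, rule_format, of "supp f"] by blast
    have \<beta>AW: "AW \<beta>" using HS_AW suppf_HS \<beta>(1) by blast
    have K: "sless (<) (l x) \<beta>" if xs: "x \<in> supp h'" for x
    proof -
      have "\<exists>c\<in>H. x \<le> c"
      proof -
        have "x \<in> supp (l h) \<or> x \<in> supp f0" using xs hf(3) supp_add[of "l h" f0] by blast
        then show ?thesis
        proof
          assume "x \<in> supp f0" then have "x \<in> H" using hf(2) S_H by (auto simp: ser_def)
          then show ?thesis by blast
        next
          assume xl: "x \<in> supp (l h)"
          have "x \<le> h0"
          proof (rule ccontr)
            assume "\<not> x \<le> h0" then have hx: "h0 < x" by simp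
            have lhnz: "l h \<noteq> 0" using xl by auto
            define v where "v = val (<) (l h)"
            have v: "v \<in> supp (l h)" "\<forall>y\<in>supp (l h). y \<le> v" using val_max[OF lAW lhnz] unfolding v_def by auto
            have hv: "h0 < v" using hx v(2) xl by (meson less_le_trans)
            have e0v: "e0 v = 0" using hv by (simp add: e0_def)
            have lv: "l h v \<noteq> 0" using v(1) by (simp add: supp_def)
            have d1: "sless (<) (l h) e0" using dag[OF hf(1) e0ser e0nz] sabs_e0 by simp
            have d2: "sless (<) (l (-h)) e0" using dag[OF Hneg[OF hf(1)] e0ser e0nz] sabs_e0 by simp
            have bnd: "y \<le> v" if "y \<in> supp e0 \<union> supp (l h)" for y
              using that v(2) hv supp_e0 by auto
            have val1: "val (<) (e0 - l h) = v"
            proof (rule val_lin)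
              show "v \<in> supp (e0 - l h)" using e0v lv by (simp add: supp_def)
              show "\<forall>y\<in>supp (e0 - l h). y \<le> v" using bnd supp_diff[of e0 "l h"] by blast
            qed
            have val2: "val (<) (e0 + l h) = v"
            proof (rule val_lin)
              show "v \<in> supp (e0 + l h)" using e0v lv by (simp add: supp_def)
              show "\<forall>y\<in>supp (e0 + l h). y \<le> v" using bnd supp_add[of e0 "l h"] by blast
            qed
            from d1 have "spos (<) (e0 - l h)" unfolding sless_def .
            then have p1: "0 < (e0 - l h) v" unfolding spos_def val1 by simp
            have "e0 - l (-h) = e0 + l h" using lneg[of h] by simp
            with d2 have "spos (<) (e0 + l h)" unfolding sless_def by simp
            then have p2: "0 < (e0 + l h) v" unfolding spos_def val2 by simp
            from p1 p2 e0v show False by simp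
          qed
          then show ?thesis using h0H by blast
        qed
      qed
      then obtain c where c: "c \<in> H" "x \<le> c" by blast
      have c\<beta>: "sless (<) (l c) \<beta>" using suppf_above \<beta>(1) c(1) by blast
      show ?thesis
      proof (cases "x = c")
        case True then show ?thesis using c\<beta> by simp
      next
        case False then have "x < c" using c(2) by simp
        then have "sless (<) (l x) (l c)" by (rule lmono)
        then show ?thesis using sless_trans[OF lAW lAW \<beta>AW _ c\<beta>] by blast
      qed
    qed
    define L where "L = Log_sharp l h'"
    have Lsupp: "\<exists>x\<in>supp h'. y = l x" if "y \<in> supp L" for y
    proof -
      have ne: "(if y \<in> range l then h' (the_inv l y) else 0) \<noteq> 0"
        using that unfolding L_def Log_sharp_def emb_def supp_def by simp
      then obtain z where z: "y = l z" by (auto split: if_splits)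
      then have "h' z \<noteq> 0" using ne the_inv_f_f[OF linj, of z] by simp
      then show ?thesis using z by (auto simp: supp_def)
    qed
    have \<beta>L: "\<beta> \<notin> supp L"
    proof
      assume "\<beta> \<in> supp L"
      then obtain x where "x \<in> supp h'" "\<beta> = l x" using Lsupp by blast
      then show False using K sless_irrefl by metis
    qed
    define A where "A = sabs (sless (<)) f"
    have suppA: "supp A = supp f" unfolding A_def sabs_def by simp
    have AWU: "AW m" if "m \<in> supp f \<union> supp L" for m
    proof -
      { assume "m \<in> supp f" then have ?thesis using HS_AW suppf_HS by blast }
      moreover
      { assume "m \<in> supp L" then obtain x where "m = l x" using Lsupp by blast
        then have ?thesis using lAW by simp }
      ultimately show ?thesis using that by blast
    qed
    have valf: "val (sless (<)) f = \<beta>"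
    proof (rule val_unique[of \<beta> f "sless (<)", OF \<beta>(1) \<beta>(2)])
      fix m' assume m': "m' \<in> supp f" "\<forall>x\<in>supp f. \<not> sless (<) m' x"
      have "\<not> sless (<) m' \<beta>" "\<not> sless (<) \<beta> m'" using m' \<beta> by auto
      then show "m' = \<beta>" using sless_trich[OF AWU AWU, of m' \<beta>] m'(1) \<beta>(1) by blast
    qed
    have fb: "f \<beta> \<noteq> 0" using \<beta>(1) by (simp add: supp_def)
    have vnf: "val (sless (<)) (-f) = \<beta>" using val_supp_cong[of "-f" f "sless (<)"] valf by simp
    have A\<beta>: "0 < A \<beta>"
    proof (cases "spos (sless (<)) (-f)")
      case True
      then have "0 < (-f) \<beta>" unfolding spos_def vnf by simp
      then show ?thesis using True unfolding A_def sabs_def by simp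
    next
      case False
      then have "\<not> 0 < (-f) \<beta>" using \<beta>(1) unfolding spos_def vnf by auto
      then have "0 < f \<beta>" using fb by (simp add: neq_iff)
      then show ?thesis using False unfolding A_def sabs_def by simp
    qed
    define D where "D = A - L"
    have L\<beta>: "L \<beta> = 0" using \<beta>L by (simp add: supp_def)
    have D\<beta>: "D \<beta> = A \<beta>" using L\<beta> by (simp add: D_def)
    have suppD: "supp D \<subseteq> supp f \<union> supp L" using supp_diff[of A L] suppA unfolding D_def by simp
    have \<beta>D: "\<beta> \<in> supp D" using D\<beta> A\<beta> by (simp add: supp_def)
    have maxD: "\<forall>y\<in>supp D. \<not> sless (<) \<beta> y"
    proof
      fix y assume "y \<in> supp D"
      then have "y \<in> supp f \<or> y \<in> supp L" using suppD by blast
      then show "\<not> sless (<) \<beta> y"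
      proof
        assume "y \<in> supp f" then show ?thesis using \<beta>(2) by blast
      next
        assume "y \<in> supp L"
        then obtain x where "x \<in> supp h'" "y = l x" using Lsupp by blast
        then have "sless (<) y \<beta>" using K by simp
        then show ?thesis using sless_asym by blast
      qed
    qed
    have valD: "val (sless (<)) D = \<beta>"
    proof (rule val_unique[of \<beta> D "sless (<)", OF \<beta>D maxD])
      fix m' assume m': "m' \<in> supp D" "\<forall>x\<in>supp D. \<not> sless (<) m' x"
      have "\<not> sless (<) m' \<beta>" using m'(2) \<beta>D by blast
      moreover have "\<not> sless (<) \<beta> m'" using maxD m'(1) by blast
      moreover have "AW m'" "AW \<beta>" using AWU suppD m'(1) \<beta>(1) by blast+
      ultimately show "m' = \<beta>" using sless_trich by blast
    qed
    have "spos (sless (<)) D" unfolding spos_def valD using \<beta>D D\<beta> A\<beta> by auto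
    then show "sless (sless (<)) (Log_sharp l h') (sabs (sless (<)) f)"
      unfolding sless_def D_def A_def L_def .
  qed
  show ?thesis unfolding HSeq ExpS proper_convex_subgroup_def anti_lex_product_def
    using lH_sub HS_sub conv neq serS_sub inter prod P3 by blast
qed

end
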